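(* There is an absolute constant $c>0$ such that for all $p\in(0,0.1)$, $$\mathbb{P}_p(E)\le \exp\big[-c\,q^{-1}(\log q^{-1})^2\big].$$
   Context: Let $q=-\log(1-p)$, $A=\lceil 1/\sqrt q\rceil$, $B=\lfloor q^{-1}\log q^{-1}\rfloor$. Under $\mathbb{P}_p$, the initial configuration assigns independent states to sites of $\mathbb{Z}^2$: the origin is active with probability $p$, else empty; every other site is occupied with probability $p$, else empty. A rectangle is $\{a,\dots,c\}\times\{b,\dots,d\}\subset\mathbb{Z}^2$ with dimensions $(c-a+1,d-b+1)$; columns are $\{x\}\times\{b,\dots,d\}$, rows $\{a,\dots,c\}\times\{y\}$. A rectangle has a double gap in the columns (resp. rows) if two consecutive columns (resp. rows) consist entirely of initially empty sites; $G(R)$ is the event that $R$ has no double gap in the columns or rows. $E$ is the union of $G(R)$ over all rectangles $R$ containing the origin with one dimension in $[B-A-10,B-A]$ and the other in $[1,A]$. *)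

theory Defs
  imports "HOL-Probability.Probability"
begin

datatype state = Empty | Occupied | Active

type_synonym config = "int \<times> int \<Rightarrow> state"

definition site_pmf :: "real \<Rightarrow> int \<times> int \<Rightarrow> state pmf" where
  "site_pmf p x = map_pmf (\<lambda>b. if b then (if x = (0,0) then Active else Occupied) else Empty)
                          (bernoulli_pmf p)"

definition Pp :: "real \<Rightarrow> config measure" where
  "Pp p = (\<Pi>\<^sub>M x\<in>UNIV. measure_pmf (site_pmf p x))"

definition qq :: "real \<Rightarrow> real" where
  "qq p = - ln (1 - p)"

definition AA :: "real \<Rightarrow> int" where
  "AA p = \<lceil>1 / sqrt (qq p)\<rceil>"

definition BB :: "real \<Rightarrow> int" where
  "BB p = \<lfloor>(1 / qq p) * ln (1 / qq p)\<rfloor>"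

definition double_gap_cols :: "config \<Rightarrow> int \<Rightarrow> int \<Rightarrow> int \<Rightarrow> int \<Rightarrow> bool" where
  "double_gap_cols \<omega> a b c d \<longleftrightarrow>
     (\<exists>x. a \<le> x \<and> x + 1 \<le> c \<and> (\<forall>y\<in>{b..d}. \<omega> (x, y) = Empty \<and> \<omega> (x + 1, y) = Empty))"

definition double_gap_rows :: "config \<Rightarrow> int \<Rightarrow> int \<Rightarrow> int \<Rightarrow> int \<Rightarrow> bool" where
  "double_gap_rows \<omega> a b c d \<longleftrightarrow>
     (\<exists>y. b \<le> y \<and> y + 1 \<le> d \<and> (\<forall>x\<in>{a..c}. \<omega> (x, y) = Empty \<and> \<omega> (x, y + 1) = Empty))"

definition G :: "int \<Rightarrow> int \<Rightarrow> int \<Rightarrow> int \<Rightarrow> config set" where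
  "G a b c d = {\<omega>. \<not> double_gap_cols \<omega> a b c d \<and> \<not> double_gap_rows \<omega> a b c d}"

definition good_dims :: "real \<Rightarrow> int \<Rightarrow> int \<Rightarrow> bool" where
  "good_dims p w h \<longleftrightarrow>
     (BB p - AA p - 10 \<le> w \<and> w \<le> BB p - AA p \<and> 1 \<le> h \<and> h \<le> AA p) \<or>
     (BB p - AA p - 10 \<le> h \<and> h \<le> BB p - AA p \<and> 1 \<le> w \<and> w \<le> AA p)"

definition EE :: "real \<Rightarrow> config set" where
  "EE p = (\<Union>{G a b c d | a b c d. a \<le> 0 \<and> 0 \<le> c \<and> b \<le> 0 \<and> 0 \<le> d \<and>
                                  good_dims p (c - a + 1) (d - b + 1)})"

end

theory Submission
  imports Defs
begin


lemma Pp_pps: "product_prob_space (\<lambda>x. measure_pmf (site_pmf p x))"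
  by (rule product_prob_spaceI) (simp add: prob_space_measure_pmf)

lemma Pp_prob: "prob_space (Pp p)"
  unfolding Pp_def by (rule prob_space_PiM) (simp add: prob_space_measure_pmf)

lemma space_Pp: "space (Pp p) = UNIV"
  unfolding Pp_def by (simp add: space_PiM)

lemma Pp_collect:
  assumes "finite J"
  shows "measure (Pp p) {\<omega>. \<forall>z\<in>J. \<omega> z \<in> X z} = (\<Prod>z\<in>J. measure (site_pmf p z) (X z))"
proof -
  interpret product_prob_space "\<lambda>x. measure_pmf (site_pmf p x)" UNIV by (rule Pp_pps)
  have "emeasure (Pp p) {\<omega>. \<forall>z\<in>J. \<omega> z \<in> X z} = (\<Prod>z\<in>J. emeasure (site_pmf p z) (X z))"
    using emeasure_PiM_Collect[of J X] assms unfolding Pp_def by (simp add: space_PiM)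
  moreover have "emeasure (Pp p) {\<omega>. \<forall>z\<in>J. \<omega> z \<in> X z} = measure (Pp p) {\<omega>. \<forall>z\<in>J. \<omega> z \<in> X z}"
    using Pp_prob by (simp add: finite_measure.emeasure_eq_measure prob_space_def)
  ultimately show ?thesis
    by (simp add: measure_pmf.emeasure_eq_measure prod_ennreal measure_nonneg prod_nonneg)
qed

lemma Pp_sets: "finite J \<Longrightarrow> {\<omega>. \<forall>z\<in>J. \<omega> z \<in> X z} \<in> sets (Pp p)"
proof -
  assume J: "finite J"
  interpret product_prob_space "\<lambda>x. measure_pmf (site_pmf p x)" UNIV by (rule Pp_pps)
  have "{\<omega>. \<forall>z\<in>J. \<omega> z \<in> X z} = (\<Inter>z\<in>J. {\<omega>\<in>space (Pp p). \<omega> z \<in> X z}) \<inter> space (Pp p)"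
    by (auto simp: space_Pp)
  also have "\<dots> \<in> sets (Pp p)"
  proof (cases "J = {}")
    case True then show ?thesis by simp
  next
    case False
    have "\<And>z. {\<omega>\<in>space (Pp p). \<omega> z \<in> X z} \<in> sets (Pp p)"
      unfolding Pp_def by (rule sets_Collect_single') auto
    then show ?thesis using J False by (intro sets.Int sets.finite_INT) auto
  qed
  finally show ?thesis .
qed

lemma site_nonempty: "0 \<le> p \<Longrightarrow> p \<le> 1 \<Longrightarrow> measure (site_pmf p z) {s. s \<noteq> Empty} = p"
proof -
  assume "0 \<le> p" "p \<le> 1"
  have "(\<lambda>b. if b then (if z = (0,0) then Active else Occupied) else Empty) -` {s. s \<noteq> Empty} = {True}"
    by auto
  then show ?thesis using \<open>0 \<le> p\<close> \<open>p \<le> 1\<close> unfolding site_pmf_def measure_map_pmf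
    by (simp add: measure_pmf_single del: measure_map_pmf)
qed

lemma site_empty: "0 \<le> p \<Longrightarrow> p \<le> 1 \<Longrightarrow> measure (site_pmf p z) {Empty} = 1 - p"
proof -
  assume "0 \<le> p" "p \<le> 1"
  have "(\<lambda>b. if b then (if z = (0,0) then Active else Occupied) else Empty) -` {Empty} = {False}"
    by auto
  then show ?thesis using \<open>0 \<le> p\<close> \<open>p \<le> 1\<close> unfolding site_pmf_def measure_map_pmf
    by (simp add: measure_pmf_single del: measure_map_pmf)
qed



definition blk :: "int \<Rightarrow> nat \<Rightarrow> nat \<Rightarrow> (int \<times> int) set" where
  "blk A d i = (if d = 0 then {2*int i, 2*int i+1} \<times> {1-A..A-1}
     else if d = 1 then {-2*int i-1, -2*int i} \<times> {1-A..A-1}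
     else if d = 2 then {1-A..A-1} \<times> {2*int i, 2*int i+1}
     else {1-A..A-1} \<times> {-2*int i-1, -2*int i})"

lemma blk_finite: "finite (blk A d i)"
  unfolding blk_def by auto

lemma blk_card: "A \<ge> 1 \<Longrightarrow> card (blk A d i) = 2 * nat (2*A-1)"
  unfolding blk_def by (auto simp: card_cartesian_product)

lemma blk_disj: "i \<noteq> j \<Longrightarrow> blk A d i \<inter> blk A d j = {}"
  unfolding blk_def by auto

lemma cols_core:
  assumes "\<not> double_gap_cols \<omega> a b c d" "a \<le> 0" "0 \<le> c" "b \<le> 0" "0 \<le> d"
    "d - b + 1 \<le> A" "4 * int m \<le> L + 2" "L \<le> c - a + 1"
  shows "\<exists>e<4. \<forall>i<m. \<exists>z\<in>blk A e i. \<omega> z \<noteq> Empty"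
proof -
  have ng: "\<And>x. a \<le> x \<Longrightarrow> x + 1 \<le> c \<Longrightarrow> \<exists>y\<in>{b..d}. \<omega> (x,y) \<noteq> Empty \<or> \<omega> (x+1,y) \<noteq> Empty"
    using assms(1) unfolding double_gap_cols_def by blast
  have sub: "{b..d} \<subseteq> {1-A..A-1}" using assms by auto
  show ?thesis
  proof (cases "c \<ge> 2 * int m - 1")
    case True
    have "\<forall>i<m. \<exists>z\<in>blk A 0 i. \<omega> z \<noteq> Empty"
    proof (intro allI impI)
      fix i assume "i < m"
      then obtain y where "y \<in> {b..d}" "\<omega> (2*int i,y) \<noteq> Empty \<or> \<omega> (2*int i+1,y) \<noteq> Empty"
        using ng[of "2*int i"] True assms(2) by force
      then show "\<exists>z\<in>blk A 0 i. \<omega> z \<noteq> Empty" using sub unfolding blk_def by auto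
    qed
    then show ?thesis by (intro exI[of _ 0]) auto
  next
    case False
    have "\<forall>i<m. \<exists>z\<in>blk A 1 i. \<omega> z \<noteq> Empty"
    proof (intro allI impI)
      fix i assume "i < m"
      then obtain y where "y \<in> {b..d}" "\<omega> (-2*int i-1,y) \<noteq> Empty \<or> \<omega> (-2*int i-1+1,y) \<noteq> Empty"
        using ng[of "-2*int i-1"] False assms by force
      then show "\<exists>z\<in>blk A 1 i. \<omega> z \<noteq> Empty" using sub unfolding blk_def by auto
    qed
    then show ?thesis by (intro exI[of _ 1]) auto
  qed
qed

lemma rows_core:
  assumes "\<not> double_gap_rows \<omega> a b c d" "a \<le> 0" "0 \<le> c" "b \<le> 0" "0 \<le> d"
    "c - a + 1 \<le> A" "4 * int m \<le> L + 2" "L \<le> d - b + 1"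
  shows "\<exists>e<4. \<forall>i<m. \<exists>z\<in>blk A e i. \<omega> z \<noteq> Empty"
proof -
  have ng: "\<And>y. b \<le> y \<Longrightarrow> y + 1 \<le> d \<Longrightarrow> \<exists>x\<in>{a..c}. \<omega> (x,y) \<noteq> Empty \<or> \<omega> (x,y+1) \<noteq> Empty"
    using assms(1) unfolding double_gap_rows_def by blast
  have sub: "{a..c} \<subseteq> {1-A..A-1}" using assms by auto
  show ?thesis
  proof (cases "d \<ge> 2 * int m - 1")
    case True
    have "\<forall>i<m. \<exists>z\<in>blk A 2 i. \<omega> z \<noteq> Empty"
    proof (intro allI impI)
      fix i assume "i < m"
      then obtain x where "x \<in> {a..c}" "\<omega> (x,2*int i) \<noteq> Empty \<or> \<omega> (x,2*int i+1) \<noteq> Empty"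
        using ng[of "2*int i"] True assms(4) by force
      then show "\<exists>z\<in>blk A 2 i. \<omega> z \<noteq> Empty" using sub unfolding blk_def by auto
    qed
    then show ?thesis by (intro exI[of _ 2]) auto
  next
    case False
    have "\<forall>i<m. \<exists>z\<in>blk A 3 i. \<omega> z \<noteq> Empty"
    proof (intro allI impI)
      fix i assume "i < m"
      then obtain x where "x \<in> {a..c}" "\<omega> (x,-2*int i-1) \<noteq> Empty \<or> \<omega> (x,-2*int i-1+1) \<noteq> Empty"
        using ng[of "-2*int i-1"] False assms by force
      then show "\<exists>z\<in>blk A 3 i. \<omega> z \<noteq> Empty" using sub unfolding blk_def by auto
    qed
    then show ?thesis by (intro exI[of _ 3]) auto
  qed
qed

lemma EE_blocks:
  assumes "\<omega> \<in> EE p" "4 * int m \<le> BB p - AA p - 10 + 2"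
  shows "\<exists>e<4. \<forall>i<m. \<exists>z\<in>blk (AA p) e i. \<omega> z \<noteq> Empty"
proof -
  obtain a b c d where r: "a \<le> 0" "0 \<le> c" "b \<le> 0" "0 \<le> d" "good_dims p (c - a + 1) (d - b + 1)"
    and g: "\<omega> \<in> G a b c d"
    using assms(1) unfolding EE_def by blast
  from g have gc: "\<not> double_gap_cols \<omega> a b c d" and gr: "\<not> double_gap_rows \<omega> a b c d"
    unfolding G_def by auto
  from r(5) show ?thesis unfolding good_dims_def
  proof
    assume h: "BB p - AA p - 10 \<le> c - a + 1 \<and> c - a + 1 \<le> BB p - AA p \<and> 1 \<le> d - b + 1 \<and> d - b + 1 \<le> AA p"
    show ?thesis by (rule cols_core[OF gc r(1-4), of "AA p" m "BB p - AA p - 10"]) (use h assms(2) in auto)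
  next
    assume h: "BB p - AA p - 10 \<le> d - b + 1 \<and> d - b + 1 \<le> BB p - AA p \<and> 1 \<le> c - a + 1 \<and> c - a + 1 \<le> AA p"
    show ?thesis by (rule rows_core[OF gr r(1-4), of "AA p" m "BB p - AA p - 10"]) (use h assms(2) in auto)
  qed
qed



lemma EE_small:
  assumes p: "0 \<le> p" "p \<le> 1" and A: "AA p \<ge> 1" and m: "4 * int m \<le> BB p - AA p - 10 + 2"
  shows "measure (Pp p) (EE p) \<le> 4 * (real (2 * nat (2*AA p-1)) * p) ^ m"
proof -
  let ?A = "AA p"
  define I where "I = Sigma {..<(4::nat)} (\<lambda>e. PiE {..<m} (blk ?A e))"
  define T where "T = (\<lambda>es::nat \<times> (nat \<Rightarrow> int \<times> int). {\<omega>::config. \<forall>z\<in>(snd es) ` {..<m}. \<omega> z \<in> {x. x \<noteq> Empty}})"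
  interpret P: prob_space "Pp p" by (rule Pp_prob)
  have fin: "finite I" unfolding I_def by (auto intro!: finite_PiE blk_finite)
  have sub: "EE p \<subseteq> (\<Union>es\<in>I. T es)"
  proof
    fix \<omega> assume "\<omega> \<in> EE p"
    then obtain e where e: "e < 4" "\<forall>i<m. \<exists>z\<in>blk ?A e i. \<omega> z \<noteq> Empty"
      using EE_blocks[OF _ m] by blast
    define s where "s = restrict (\<lambda>i. SOME z. z \<in> blk ?A e i \<and> \<omega> z \<noteq> Empty) {..<m}"
    have "\<forall>i<m. s i \<in> blk ?A e i \<and> \<omega> (s i) \<noteq> Empty"
    proof (intro allI impI)
      fix i assume "i < m"
      then have "\<exists>z. z \<in> blk ?A e i \<and> \<omega> z \<noteq> Empty" using e(2) by blast
      from someI_ex[OF this] \<open>i < m\<close> show "s i \<in> blk ?A e i \<and> \<omega> (s i) \<noteq> Empty"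
        unfolding s_def by simp
    qed
    then have "(e, s) \<in> I" "\<omega> \<in> T (e, s)" unfolding I_def T_def s_def using e(1) by auto
    then show "\<omega> \<in> (\<Union>es\<in>I. T es)" by blast
  qed
  have meas: "T es \<in> sets (Pp p)" for es unfolding T_def by (rule Pp_sets) auto
  have each: "measure (Pp p) (T es) = p ^ m" if "es \<in> I" for es
  proof -
    obtain e s where es: "es = (e, s)" "s \<in> PiE {..<m} (blk ?A e)" using \<open>es \<in> I\<close> unfolding I_def by auto
    have inj: "inj_on s {..<m}"
    proof (rule inj_onI)
      fix i j assume "i \<in> {..<m}" "j \<in> {..<m}" "s i = s j"
      have "s i \<in> blk ?A e i" "s j \<in> blk ?A e j" using es(2) \<open>i \<in> {..<m}\<close> \<open>j \<in> {..<m}\<close> unfolding PiE_iff by blast+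
      then show "i = j" using blk_disj[of i j ?A e] \<open>s i = s j\<close> by (metis IntI empty_iff)
    qed
    have "measure (Pp p) (T es) = (\<Prod>z\<in>s ` {..<m}. measure (site_pmf p z) {x. x \<noteq> Empty})"
      unfolding T_def es snd_conv by (rule Pp_collect) simp
    also have "\<dots> = (\<Prod>z\<in>s ` {..<m}. p)" using site_nonempty[OF p] by simp
    also have "\<dots> = p ^ m" using card_image[OF inj] by simp
    finally show ?thesis .
  qed
  have "measure (Pp p) (EE p) \<le> measure (Pp p) (\<Union>es\<in>I. T es)"
    using sub meas fin by (intro P.finite_measure_mono) auto
  also have "\<dots> \<le> (\<Sum>es\<in>I. measure (Pp p) (T es))"
    using fin meas by (intro P.finite_measure_subadditive_finite) auto
  also have "\<dots> = (\<Sum>es\<in>I. p ^ m)" using each by simp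
  also have "\<dots> = real (card I) * p ^ m" by simp
  also have "card I = 4 * (2 * nat (2*?A-1)) ^ m"
  proof -
    have "card I = (\<Sum>e<4. card (PiE {..<m} (blk ?A e)))"
      unfolding I_def by (rule card_SigmaI) (auto intro!: finite_PiE blk_finite)
    also have "\<dots> = (\<Sum>e<(4::nat). (2 * nat (2*?A-1)) ^ m)"
      by (intro sum.cong refl) (simp add: card_PiE blk_card[OF A])
    finally show ?thesis by simp
  qed
  finally show ?thesis by (simp add: power_mult_distrib)
qed

lemma EE_box:
  assumes p: "0 \<le> p" "p \<le> 1" and A: "AA p \<ge> 1" and BA: "BB p - AA p \<ge> 12"
  shows "measure (Pp p) (EE p) \<le> 1 - (1 - p) ^ card ({-(BB p + AA p)..BB p + AA p} \<times> {-(BB p + AA p)..BB p + AA p})"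
proof -
  define K where "K = BB p + AA p"
  define S where "S = {-K..K} \<times> {-K..K}"
  define Box where "Box = {\<omega>::config. \<forall>z\<in>S. \<omega> z \<in> {Empty}}"
  interpret P: prob_space "Pp p" by (rule Pp_prob)
  have fin: "finite S" unfolding S_def by auto
  have bm: "Box \<in> sets (Pp p)" unfolding Box_def by (rule Pp_sets[OF fin])
  have disj: "EE p \<subseteq> space (Pp p) - Box"
  proof
    fix \<omega> assume "\<omega> \<in> EE p"
    then obtain a b c d where r: "a \<le> 0" "0 \<le> c" "b \<le> 0" "0 \<le> d" "good_dims p (c - a + 1) (d - b + 1)"
      and g: "\<omega> \<in> G a b c d"
      unfolding EE_def by blast
    from g have gc: "\<not> double_gap_cols \<omega> a b c d" and gr: "\<not> double_gap_rows \<omega> a b c d"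
      unfolding G_def by auto
    have "\<omega> \<notin> Box"
    proof
      assume box: "\<omega> \<in> Box"
      from r(5) show False unfolding good_dims_def
      proof
        assume h: "BB p - AA p - 10 \<le> c - a + 1 \<and> c - a + 1 \<le> BB p - AA p \<and> 1 \<le> d - b + 1 \<and> d - b + 1 \<le> AA p"
        have "double_gap_cols \<omega> a b c d" unfolding double_gap_cols_def
          using h r box BA A by (intro exI[of _ a]) (auto simp: Box_def S_def K_def)
        then show False using gc by simp
      next
        assume h: "BB p - AA p - 10 \<le> d - b + 1 \<and> d - b + 1 \<le> BB p - AA p \<and> 1 \<le> c - a + 1 \<and> c - a + 1 \<le> AA p"
        have "double_gap_rows \<omega> a b c d" unfolding double_gap_rows_def
          using h r box BA A by (intro exI[of _ b]) (auto simp: Box_def S_def K_def)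
        then show False using gr by simp
      qed
    qed
    then show "\<omega> \<in> space (Pp p) - Box" by (simp add: space_Pp)
  qed
  have "measure (Pp p) (EE p) \<le> measure (Pp p) (space (Pp p) - Box)"
    using disj bm by (intro P.finite_measure_mono) auto
  also have "\<dots> = 1 - measure (Pp p) Box"
    using bm by (simp add: P.finite_measure_compl P.prob_space)
  also have "measure (Pp p) Box = (1 - p) ^ card S"
    unfolding Box_def using Pp_collect[OF fin, of p "\<lambda>_. {Empty}"] by (simp add: site_empty[OF p])
  finally show ?thesis unfolding S_def K_def .
qed



lemma basics:
  assumes "0 < p" "p < 0.1"
  shows "qq p > 0" "p \<le> qq p" "1 / qq p \<ge> 9"
proof -
  have "ln (1 - p) \<le> (1 - p) - 1" using assms by (intro ln_le_minus_one) auto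
  then show q: "p \<le> qq p" unfolding qq_def by simp
  then show "qq p > 0" using assms by simp
  have "ln (1 / (1 - p)) \<le> 1 / (1 - p) - 1" using assms by (intro ln_le_minus_one) auto
  also have "\<dots> \<le> 1/9" using assms by (simp add: field_simps)
  finally have "qq p \<le> 1/9" unfolding qq_def using assms by (simp add: ln_div)
  then show "1 / qq p \<ge> 9" using \<open>qq p > 0\<close> by (simp add: field_simps)
qed

lemma ln_ge2: "(x::real) \<ge> 9 \<Longrightarrow> ln x \<ge> 2"
proof -
  assume x: "x \<ge> 9"
  have "exp (2::real) = exp 1 ^ 2" by (simp add: exp_of_nat_mult[symmetric])
  also have "\<dots> \<le> 3 ^ 2" using exp_le by (intro power_mono) auto
  finally have "exp 2 \<le> x" using x by simp
  then show ?thesis using ln_ge_iff[of x 2] x by simp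
qed

lemma AB_bounds:
  assumes "0 < p" "p < 0.1"
  defines "x \<equiv> 1 / qq p"
  shows "sqrt x \<le> AA p" "AA p \<le> sqrt x + 1" "x * ln x - 1 \<le> BB p" "BB p \<le> x * ln x"
proof -
  have q: "qq p > 0" using basics[OF assms(1,2)] by simp
  have "1 / sqrt (qq p) = sqrt x" unfolding x_def by (simp add: real_sqrt_divide)
  then have A: "AA p = \<lceil>sqrt x\<rceil>" unfolding AA_def by simp
  have B: "BB p = \<lfloor>x * ln x\<rfloor>" unfolding BB_def x_def by simp
  show "sqrt x \<le> AA p" "AA p \<le> sqrt x + 1" unfolding A by linarith+
  show "x * ln x - 1 \<le> BB p" "BB p \<le> x * ln x" unfolding B by linarith+
qed



lemma div4a: "(n::int) - 3 \<le> 4 * (n div 4)" by presburger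
lemma div4b: "4 * ((n::int) div 4) \<le> n" by presburger

lemma small_regime:
  assumes p: "0 < p" "p < 0.1" and x0: "1 / qq p \<ge> 625"
  shows "measure (Pp p) (EE p) \<le> exp (- (1/64) * (1 / qq p) * (ln (1 / qq p))\<^sup>2)"
proof -
  define x where "x = 1 / qq p"
  have q: "qq p > 0" "p \<le> qq p" using basics[OF p] by auto
  have x: "x \<ge> 625" using x0 unfolding x_def .
  have px: "p \<le> 1 / x" using q unfolding x_def by simp
  note AB = AB_bounds[OF p, folded x_def]
  have lx: "ln x \<ge> 2" using ln_ge2 x by simp
  have sx: "sqrt x \<ge> 25" using real_sqrt_le_mono[OF x] by simp
  have sx2: "sqrt x * sqrt x = x" using x by simp
  define t where "t = sqrt (sqrt x)"
  have t2: "t * t = sqrt x" unfolding t_def using sx by simp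
  have t5: "t \<ge> 5" unfolding t_def using real_sqrt_le_mono[OF sx] by simp
  have t4: "t^4 = x"
  proof -
    have "t^4 = (t*t)*(t*t)" by (simp add: power4_eq_xxxx)
    then show ?thesis using t2 sx2 by simp
  qed
  have lt: "ln t = ln x / 4"
  proof -
    have "ln x = ln (t^4)" using t4 by simp
    also have "\<dots> = 4 * ln t" using t5 by (simp add: ln_realpow)
    finally show ?thesis by simp
  qed
  have A1: "AA p \<ge> 1" using AB(1) sx by linarith
  define m where "m = nat ((BB p - AA p - 8) div 4)"
  have nn: "BB p - AA p - 8 \<ge> 0"
  proof -
    have "x * ln x \<ge> 2 * x" using lx x by (simp add: mult_left_mono[of 2 "ln x" x, simplified mult.commute])
    moreover have "sqrt x \<le> x / 25" proof -
      have "25 * sqrt x \<le> sqrt x * sqrt x" by (rule mult_right_mono[OF sx]) (use x in simp)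
      then show ?thesis using sx2 by linarith
    qed
    ultimately show ?thesis using AB x by linarith
  qed
  have im: "int m = (BB p - AA p - 8) div 4" unfolding m_def using nn by simp
  have m4: "4 * int m \<le> BB p - AA p - 10 + 2" unfolding im using div4b[of "BB p - AA p - 8"] by simp
  have mge: "real m \<ge> x * ln x / 8"
  proof -
    have "4 * int m \<ge> BB p - AA p - 8 - 3" unfolding im by (rule div4a)
    then have "real_of_int (4 * int m) \<ge> real_of_int (BB p - AA p - 8 - 3)" by (simp only: of_int_le_iff)
    then have "4 * real m \<ge> real_of_int (BB p) - real_of_int (AA p) - 11" by simp
    then have "4 * real m \<ge> x * ln x - 1 - (sqrt x + 1) - 11" using AB by linarith
    moreover have "x * ln x \<ge> 2 * x" using lx x by (simp add: mult_left_mono[of 2 "ln x" x, simplified mult.commute])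
    moreover have "sqrt x \<le> x / 25" proof -
      have "25 * sqrt x \<le> sqrt x * sqrt x" by (rule mult_right_mono[OF sx]) (use x in simp)
      then show ?thesis using sx2 by linarith
    qed
    ultimately show ?thesis using x by linarith
  qed
  define r where "r = real (2 * nat (2*AA p-1)) * p"
  have r0: "r \<ge> 0" unfolding r_def using p by simp
  have r1: "r \<le> 1 / t"
  proof -
    have "real (2 * nat (2*AA p-1)) = 2 * (2 * real_of_int (AA p) - 1)" using A1 by simp
    also have "\<dots> \<le> 2 * (2 * sqrt x + 1)" using AB(2) by simp
    also have "\<dots> \<le> 5 * sqrt x" using sx by simp
    finally have "r \<le> 5 * sqrt x * (1 / x)" unfolding r_def using px p x
      by (intro mult_mono) auto
    also have "\<dots> = 5 * sqrt x / (sqrt x * sqrt x)" using sx2 by simp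
    also have "\<dots> = (sqrt x * 5) / (sqrt x * sqrt x)" by (simp only: mult.commute)
    also have "\<dots> = 5 / sqrt x" using sx by (intro nonzero_mult_divide_mult_cancel_left) auto
    also have "\<dots> = 5 / (t * t)" using t2 by simp
    also have "\<dots> \<le> t / (t * t)" using t5 by (intro divide_right_mono) auto
    also have "\<dots> = 1 / t" using t5 by simp
    finally show ?thesis .
  qed
  have "measure (Pp p) (EE p) \<le> 4 * r ^ m" unfolding r_def
    using EE_small[OF _ _ A1 m4] p by simp
  also have "\<dots> \<le> 4 * (1 / t) ^ m" using r0 r1 by (intro mult_left_mono power_mono) auto
  also have "(1 / t) ^ m = exp (- real m * ln t)"
  proof -
    have "exp (real m * ln t) = t ^ m" using t5 by (simp add: exp_of_nat_mult)
    then show ?thesis by (simp add: exp_minus power_one_over inverse_eq_divide)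
  qed
  also have "\<dots> \<le> exp (- (x * ln x / 8) * (ln x / 4))" unfolding lt using mge lx
    by (intro exp_mono) (simp add: mult_right_mono)
  also have "4 * exp (- (x * ln x / 8) * (ln x / 4)) \<le> exp (- (1/64) * x * (ln x)\<^sup>2)"
  proof -
    have big: "(1/64) * x * (ln x)\<^sup>2 \<ge> 3"
    proof -
      have "(ln x)\<^sup>2 \<ge> 2\<^sup>2" using lx by (intro power_mono) auto
      then have "x * (ln x)\<^sup>2 \<ge> 625 * 4" using x by (intro mult_mono) auto
      then show ?thesis by simp
    qed
    have "4 \<le> exp ((1/64) * x * (ln x)\<^sup>2)"
      using exp_ge_add_one_self[of "(1/64) * x * (ln x)\<^sup>2"] big by linarith
    then have "4 * exp (- (x * ln x / 8) * (ln x / 4)) \<le> exp ((1/64) * x * (ln x)\<^sup>2) * exp (- (x * ln x / 8) * (ln x / 4))"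
      by (intro mult_right_mono) auto
    also have "\<dots> = exp (- (1/64) * x * (ln x)\<^sup>2)" unfolding exp_add[symmetric]
      by (simp add: power2_eq_square algebra_simps)
    finally show ?thesis .
  qed
  finally show ?thesis unfolding x_def by simp
qed


lemma moderate_regime:
  assumes p: "0 < p" "p < 0.1" and x0: "1 / qq p \<le> 625"
  shows "measure (Pp p) (EE p) \<le> 1 - 0.9 ^ (10^12)"
proof -
  define x where "x = 1 / qq p"
  have x9: "x \<ge> 9" using basics[OF p] unfolding x_def by simp
  have x: "x \<le> 625" using x0 unfolding x_def .
  note AB = AB_bounds[OF p, folded x_def]
  have lx: "ln x \<ge> 2" using ln_ge2 x9 by simp
  have lxx: "ln x \<le> x" using ln_le_minus_one[of x] x9 by simp
  have sx: "sqrt x \<ge> 3" using real_sqrt_le_mono[OF x9] by simp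
  have sx2: "sqrt x * sqrt x = x" using x9 by simp
  have sxx: "sqrt x \<le> x / 3"
  proof -
    have "3 * sqrt x \<le> sqrt x * sqrt x" by (rule mult_right_mono[OF sx]) (use x9 in simp)
    then show ?thesis using sx2 by linarith
  qed
  have A1: "AA p \<ge> 1" using AB(1) sx by linarith
  have xl: "x * ln x \<ge> 2 * x" using lx x9 by (simp add: mult_left_mono[of 2 "ln x" x, simplified mult.commute])
  have BA: "BB p - AA p \<ge> 12"
  proof -
    have "real_of_int (BB p) - real_of_int (AA p) \<ge> 12" using AB xl sxx x9 by linarith
    then show ?thesis by linarith
  qed
  define K where "K = BB p + AA p"
  have xlx: "x * ln x \<le> x * x" using lxx x9 by (intro mult_left_mono) auto
  have xx: "x * x \<le> 625 * 625" using x x9 by (intro mult_mono) auto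
  have K0: "K \<ge> 0" using BA A1 unfolding K_def by simp
  have Kb: "real_of_int K \<le> 391251" unfolding K_def using AB xlx xx sxx x by simp
  have Kb': "K \<le> 391251" using Kb by linarith
  have cS: "card ({-K..K} \<times> {-K..K}) \<le> 10^12"
  proof -
    have "card ({-K..K} \<times> {-K..K}) = nat (2*K+1) * nat (2*K+1)"
      by (simp add: card_cartesian_product)
    also have "\<dots> \<le> 782503 * 782503" using Kb' K0 by (intro mult_mono) auto
    finally show ?thesis by simp
  qed
  have 1: "measure (Pp p) (EE p) \<le> 1 - (1 - p) ^ card ({-K..K} \<times> {-K..K})"
    using EE_box[OF _ _ A1 BA] p unfolding K_def by simp
  have 2: "(1 - p) ^ card ({-K..K} \<times> {-K..K}) \<ge> (0.9::real) ^ card ({-K..K} \<times> {-K..K})"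
    using p by (intro power_mono) auto
  have 3: "(0.9::real) ^ card ({-K..K} \<times> {-K..K}) \<ge> 0.9 ^ (10^12)"
    using cS by (intro power_decreasing) auto
  show ?thesis using 1 2 3 by linarith
qed

lemma moderate_X:
  assumes p: "0 < p" "p < 0.1" and x0: "1 / qq p \<le> 625"
  shows "(1 / qq p) * (ln (1 / qq p))\<^sup>2 \<le> 625^3"
proof -
  define x where "x = 1 / qq p"
  have x9: "x \<ge> 9" using basics[OF p] unfolding x_def by simp
  have x: "x \<le> 625" using x0 unfolding x_def .
  have l0: "ln x \<ge> 0" using x9 by simp
  have lxx: "ln x \<le> 625" using ln_le_minus_one[of x] x9 x by simp
  have "(ln x)\<^sup>2 \<le> 625\<^sup>2" using l0 lxx by (intro power_mono) auto
  then have "x * (ln x)\<^sup>2 \<le> 625 * 625\<^sup>2" using x x9 by (intro mult_mono) auto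
  then show ?thesis unfolding x_def by (simp add: power3_eq_cube power2_eq_square)
qed

theorem lemma7:
  shows "\<exists>c>0. \<forall>p::real. 0 < p \<and> p < 0.1 \<longrightarrow>
           measure (Pp p) (EE p) \<le> exp (- c * (1 / qq p) * (ln (1 / qq p))\<^sup>2)"
proof -
  define \<delta> :: real where "\<delta> = 0.9 ^ (10^12)"
  define c :: real where "c = min (1/64) (\<delta> / 625^3)"
  have d0: "\<delta> > 0" unfolding \<delta>_def by simp
  have c0: "c > 0" unfolding c_def using d0 by simp
  show ?thesis
  proof (intro exI[of _ c] conjI allI impI c0)
    fix p :: real assume pp: "0 < p \<and> p < 0.1"
    then have p: "0 < p" "p < 0.1" by auto
    define X where "X = (1 / qq p) * (ln (1 / qq p))\<^sup>2"
    have X0: "X \<ge> 0" unfolding X_def using basics[OF p] by simp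
    have eq: "- c * (1 / qq p) * (ln (1 / qq p))\<^sup>2 = - (c * X)" unfolding X_def by simp
    show "measure (Pp p) (EE p) \<le> exp (- c * (1 / qq p) * (ln (1 / qq p))\<^sup>2)"
      unfolding eq
    proof (cases "1 / qq p \<ge> 625")
      case True
      have "measure (Pp p) (EE p) \<le> exp (- ((1/64) * X))"
        using small_regime[OF p True] unfolding X_def by (simp add: mult.assoc)
      also have "\<dots> \<le> exp (- (c * X))"
      proof -
        have "c \<le> 1/64" unfolding c_def by simp
        then have "c * X \<le> (1/64) * X" using X0 by (rule mult_right_mono)
        then show ?thesis by simp
      qed
      finally show "measure (Pp p) (EE p) \<le> exp (- (c * X))" .
    next
      case False
      then have F: "1 / qq p \<le> 625" by simp
      have "c * X \<le> (\<delta> / 625^3) * 625^3" unfolding c_def using X0 d0 moderate_X[OF p F, folded X_def]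
        by (intro mult_mono) auto
      then have cX: "c * X \<le> \<delta>" by simp
      have "measure (Pp p) (EE p) \<le> 1 - \<delta>" using moderate_regime[OF p F] unfolding \<delta>_def .
      also have "\<dots> \<le> 1 - c * X" using cX by simp
      also have "\<dots> \<le> exp (- (c * X))" using exp_ge_add_one_self[of "- (c * X)"] by simp
      finally show "measure (Pp p) (EE p) \<le> exp (- (c * X))" .
    qed
  qed
qed

end
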